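(* Let $q$ be an odd prime power, let $\omega$ be a non-square in $\mathbb F_q$ and $\epsilon\in\mathbb F_{q^2}$ with $\epsilon^2=\omega$, and write every $z\in\mathbb F_{q^2}$ as $z=z_1+\epsilon z_2$ with $z_1,z_2\in\mathbb F_q$. Let $\mathcal C: aX^2+bXY+cXZ+dYZ+eZ^2=0$ be a non-singular conic of $\mathrm{PG}(2,q^2)$ with $a,b,c,d,e\in\mathbb F_{q^2}$, $b\ne0$. Put $A=-a_2b_1+a_1b_2$, $B=b_2c_1-b_1c_2-a_2d_1+a_1d_2$, $C=-c_2d_1+c_1d_2+b_2e_1-b_1e_2$, $D=d_2e_1-d_1e_2$, and let $\mathcal S$ be the cubic surface of $\mathrm{PG}(3,q)$, in homogeneous coordinates $(t_1:t_2:X:Z)$, with equation $$2t_1t_2(b_1X+d_1Z)-(t_1^2+\omega t_2^2)(b_2X+d_2Z)+AX^3+BX^2Z+CXZ^2+DZ^3=0.$$ Then $\mathcal S$ is irreducible if and only if $b_1d_2-b_2d_1\neq0$.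
   Context: Irreducibility is understood over the algebraic closure of $\mathbb F_q$. *)

theory Defs
  imports "HOL-Algebra.Algebraic_Closure_Type"
begin

text \<open>Polynomials in the four variables t1, t2, X, Z over a commutative ring 'k,
  realised as iterated univariate polynomials
  'k[t1][t2][X][Z] = 'k poly poly poly poly.\<close>

type_synonym 'k mpoly4 = "'k poly poly poly poly"

definition mconst :: "'k::comm_ring_1 \<Rightarrow> 'k mpoly4" where
  "mconst c = [:[:[:[:c:]:]:]:]"

definition var_t1 :: "'k::comm_ring_1 mpoly4" where
  "var_t1 = [:[:[: [:0, 1:] :]:]:]"

definition var_t2 :: "'k::comm_ring_1 mpoly4" where
  "var_t2 = [:[: ([:0, 1:] :: 'k poly poly) :]:]"

definition var_X :: "'k::comm_ring_1 mpoly4" where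
  "var_X = [: ([:0, 1:] :: 'k poly poly poly) :]"

definition var_Z :: "'k::comm_ring_1 mpoly4" where
  "var_Z = ([:0, 1:] :: 'k mpoly4)"

text \<open>A conic a X^2 + b XY + c XZ + d YZ + e Z^2 over a field K is non-singular
  iff it has no singular point, i.e. no projective point (x:y:z) over K where the form
  and all its partial derivatives vanish. (We use K = algebraic closure.)\<close>

definition conic_nonsingular :: "'k::field \<Rightarrow> 'k \<Rightarrow> 'k \<Rightarrow> 'k \<Rightarrow> 'k \<Rightarrow> bool" where
  "conic_nonsingular a b c d e \<longleftrightarrow>
     \<not> (\<exists>x y z. (x, y, z) \<noteq> (0, 0, 0) \<and>
          a*x^2 + b*x*y + c*x*z + d*y*z + e*z^2 = 0 \<and>
          2*a*x + b*y + c*z = 0 \<and>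
          b*x + d*z = 0 \<and>
          c*x + d*y + 2*e*z = 0)"

text \<open>The cubic form of the surface S, with coefficients in F_q, viewed over an
  extension field via the embedding h (later: the algebraic closure).\<close>

definition surface_poly ::
  "('a::field \<Rightarrow> 'k::field) \<Rightarrow> 'a \<Rightarrow> 'a \<Rightarrow> 'a \<Rightarrow> 'a \<Rightarrow> 'a \<Rightarrow> 'a \<Rightarrow> 'a \<Rightarrow> 'a \<Rightarrow> 'a
     \<Rightarrow> 'a \<Rightarrow> 'a \<Rightarrow> 'k mpoly4" where
  "surface_poly h w a1 a2 b1 b2 c1 c2 d1 d2 e1 e2 =
     (let A = - a2*b1 + a1*b2;
          B = b2*c1 - b1*c2 - a2*d1 + a1*d2;
          C = - c2*d1 + c1*d2 + b2*e1 - b1*e2;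
          D = d2*e1 - d1*e2;
          k = (\<lambda>u. mconst (h u))
      in 2 * var_t1 * var_t2 * (k b1 * var_X + k d1 * var_Z)
         - (var_t1^2 + k w * var_t2^2) * (k b2 * var_X + k d2 * var_Z)
         + k A * var_X^3 + k B * var_X^2 * var_Z + k C * var_X * var_Z^2 + k D * var_Z^3)"

end

theory Submission
  imports Defs "HOL-Number_Theory.Residues"
begin


definition rhom :: "('a::comm_ring_1 \<Rightarrow> 'b::comm_ring_1) \<Rightarrow> bool" where
  "rhom h \<longleftrightarrow> h 1 = 1 \<and> (\<forall>a b. h (a+b) = h a + h b) \<and> (\<forall>a b. h (a*b) = h a * h b)"

lemma rhom_add: "rhom h \<Longrightarrow> h (a+b) = h a + h b" by (simp add: rhom_def)
lemma rhom_mult: "rhom h \<Longrightarrow> h (a*b) = h a * h b" by (simp add: rhom_def)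
lemma rhom_1: "rhom h \<Longrightarrow> h 1 = 1" by (simp add: rhom_def)
lemma rhom_0: "rhom h \<Longrightarrow> h 0 = 0"
  using rhom_add[of h 0 0] by simp
lemma rhom_uminus: "rhom h \<Longrightarrow> h (-a) = - h a"
  using rhom_add[of h a "-a"] rhom_0[of h] by (simp add: eq_neg_iff_add_eq_0 add.commute)
lemma rhom_diff: "rhom h \<Longrightarrow> h (a-b) = h a - h b"
  using rhom_add[of h a "-b"] rhom_uminus[of h b] by simp
lemma rhom_power: "rhom h \<Longrightarrow> h (a^n) = h a ^ n"
  by (induction n) (simp_all add: rhom_1 rhom_mult)
lemma rhom_numeral: "rhom h \<Longrightarrow> h (numeral n) = numeral n"
proof (induction n)
  case One then show ?case by (simp add: rhom_1)
next
  case (Bit0 n) then show ?case using rhom_add[of h "numeral n" "numeral n"] by (simp add: numeral_Bit0)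
next
  case (Bit1 n) then show ?case using rhom_add[of h "numeral n + numeral n" 1] rhom_add[of h "numeral n" "numeral n"]
    by (simp add: numeral_Bit1 rhom_1)
qed

lemma rhom_comp: "rhom f \<Longrightarrow> rhom g \<Longrightarrow> rhom (f \<circ> g)"
  by (simp add: rhom_def)

lemma rhom_const: "rhom (\<lambda>x. [:x:])"
  by (simp add: rhom_def)

lemma map_poly_add_h: "rhom h \<Longrightarrow> map_poly h (p + q) = map_poly h p + map_poly h q"
  by (intro poly_eqI) (simp add: coeff_map_poly rhom_0 rhom_add)

lemma map_poly_smult_h: "rhom h \<Longrightarrow> map_poly h (smult a q) = smult (h a) (map_poly h q)"
  by (intro poly_eqI) (simp add: coeff_map_poly rhom_0 rhom_mult)

lemma rhom_lift:
  assumes h: "rhom h"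
  shows "rhom (\<lambda>p. poly (map_poly h p) x)"
proof -
  have 0: "h 0 = 0" using rhom_0[OF h] .
  have add: "poly (map_poly h (p+q)) x = poly (map_poly h p) x + poly (map_poly h q) x" for p q
    by (simp add: map_poly_add_h[OF h])
  have sm: "poly (map_poly h (smult a q)) x = h a * poly (map_poly h q) x" for a q
    by (simp add: map_poly_smult_h[OF h])
  have mult: "poly (map_poly h (p*q)) x = poly (map_poly h p) x * poly (map_poly h q) x" for p q
  proof (induction p)
    case 0 then show ?case by simp
  next
    case (pCons a p)
    have "pCons a p * q = smult a q + pCons 0 (p * q)" by simp
    then show ?case using pCons add sm 0
      by (simp add: map_poly_pCons algebra_simps)
  qed
  show ?thesis unfolding rhom_def
    using add mult by (simp add: rhom_1[OF h] map_poly_pCons 0)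
qed

lemma rhom_mconst: "rhom (mconst :: 'k::comm_ring_1 \<Rightarrow> 'k mpoly4)"
  unfolding rhom_def mconst_def by (simp add: pCons_one)

definition s4 :: "'k::comm_ring_1 mpoly4 \<Rightarrow> 'k mpoly4 \<Rightarrow> 'k mpoly4 \<Rightarrow> 'k mpoly4 \<Rightarrow> 'k mpoly4 \<Rightarrow> 'k mpoly4" where
  "s4 T1 T2 T3 T4 p = poly (map_poly (\<lambda>p3. poly (map_poly (\<lambda>p2. poly (map_poly (\<lambda>p1. poly (map_poly mconst p1) T1) p2) T2) p3) T3) p) T4"

lemma rhom_s4: "rhom (s4 T1 T2 T3 T4)"
  unfolding s4_def by (intro rhom_lift rhom_mconst)

lemma s4_gens:
  "s4 T1 T2 T3 T4 (mconst c) = mconst c"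
  "s4 T1 T2 T3 T4 var_t1 = T1"
  "s4 T1 T2 T3 T4 var_t2 = T2"
  "s4 T1 T2 T3 T4 var_X = T3"
  "s4 T1 T2 T3 T4 var_Z = T4"
  by (simp_all add: s4_def mconst_def var_t1_def var_t2_def var_X_def var_Z_def map_poly_pCons map_poly_1 pCons_one)

lemma rhom_unique_step:
  fixes e :: "'b::comm_ring_1 poly \<Rightarrow> 'r::comm_ring_1"
  assumes e: "rhom e" and f: "rhom f"
    and c: "\<And>a. f (e [:a:]) = e [:a:]" and v: "f (e [:0,1:]) = e [:0,1:]"
  shows "f (e p) = e p"
proof (induction p)
  case 0 then show ?case using rhom_0[OF e] rhom_0[OF f] by simp
next
  case (pCons a p)
  have "pCons a p = [:a:] + [:0,1:] * p" by simp
  then have "e (pCons a p) = e [:a:] + e [:0,1:] * e p"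
    by (metis rhom_add[OF e] rhom_mult[OF e])
  then show ?case using pCons c v rhom_add[OF f] rhom_mult[OF f] by simp
qed

lemma rhom_unique:
  fixes f :: "'k::comm_ring_1 mpoly4 \<Rightarrow> 'k mpoly4"
  assumes f: "rhom f" and c: "\<And>a. f (mconst a) = mconst a"
    and v1: "f var_t1 = var_t1" and v2: "f var_t2 = var_t2"
    and v3: "f var_X = var_X" and v4: "f var_Z = var_Z"
  shows "f p = p"
proof -
  have e1: "rhom (\<lambda>p::'k poly. [:[:[:p:]:]:])" by (simp add: rhom_def pCons_one)
  have l1: "f [:[:[:p:]:]:] = [:[:[:p:]:]:]" for p :: "'k poly"
    using rhom_unique_step[OF e1 f, of p] c v1 by (simp add: mconst_def var_t1_def pCons_one)
  have e2: "rhom (\<lambda>p::'k poly poly. [:[:p:]:])" by (simp add: rhom_def pCons_one)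
  have l2: "f [:[:p:]:] = [:[:p:]:]" for p :: "'k poly poly"
    using rhom_unique_step[OF e2 f, of p] l1 v2 by (simp add: var_t2_def)
  have e3: "rhom (\<lambda>p::'k poly poly poly. [:p:])" by (simp add: rhom_def pCons_one)
  have l3: "f [:p:] = [:p:]" for p :: "'k poly poly poly"
    using rhom_unique_step[OF e3 f, of p] l2 v3 by (simp add: var_X_def)
  have e4: "rhom (\<lambda>p::'k mpoly4. p)" by (simp add: rhom_def)
  show ?thesis
    using rhom_unique_step[OF e4 f, of p] l3 v4 by (simp add: var_Z_def)
qed



lemma xdvd_iff: "([:0,1:] :: 's::comm_ring_1 poly) dvd p \<longleftrightarrow> coeff p 0 = 0"
proof
  assume "[:0,1:] dvd p"
  then obtain q where "p = [:0,1:] * q" by (elim dvdE)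
  then show "coeff p 0 = 0" by simp
next
  assume h: "coeff p 0 = 0"
  obtain a q where p: "p = pCons a q" by (cases p)
  with h have "a = 0" by simp
  with p have "p = [:0,1:] * q" by simp
  then show "[:0,1:] dvd p" unfolding dvd_def by blast
qed

lemma x_prime: fixes a b :: "'s::{idom_divide,algebraic_semidom} poly"
  assumes "[:0,1:] dvd a * b" shows "[:0,1:] dvd a \<or> [:0,1:] dvd b"
  using assms by (simp add: xdvd_iff coeff_mult_0)

lemma x_not_unit: "\<not> is_unit ([:0,1:] :: 's::{idom_divide,algebraic_semidom} poly)"
  by (auto simp: is_unit_poly_iff)

lemma divisor_lemma: fixes h m :: "'s::{idom_divide,algebraic_semidom} poly"
  assumes hm: "h * m = [:0,c:]" and c: "is_unit c"
  shows "is_unit h \<or> [:0,1:] dvd h"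
proof -
  have "[:0,1:] dvd h * m" using hm by (simp add: xdvd_iff)
  then consider "[:0,1:] dvd h" | "[:0,1:] dvd m" using x_prime by blast
  then show ?thesis
  proof cases
    case 2
    then obtain m' where m: "m = [:0,1:] * m'" by (elim dvdE)
    have "[:0,1:] * (h * m') = [:0,1:] * [:c:]" using hm m by (simp add: algebra_simps)
    then have "h * m' = [:c:]" by (subst (asm) mult_cancel_left) simp
    then have "h dvd [:c:]" by (metis dvd_triv_left)
    moreover have "is_unit [:c:]" using c by (simp add: is_unit_const_poly_iff)
    ultimately show ?thesis using dvd_unit_imp_unit by blast
  qed simp
qed

lemma case11: fixes p0 p1 q0 q1 r :: "'s::{idom_divide,algebraic_semidom} poly"
  assumes "p1 * q1 = [:0,c:]" "p0 * q1 + p1 * q0 = 0" "p0 * q0 = r" "is_unit p1"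
  shows "[:0,1:] dvd r"
proof -
  have "p1^2 * r = - (p0^2 * (p1 * q1))"
  proof -
    have "p1^2 * r = p1 * p0 * (p1 * q0)" using assms(3) by (simp add: power2_eq_square algebra_simps)
    also have "p1 * q0 = - (p0 * q1)" using assms(2) by (simp add: eq_neg_iff_add_eq_0 add.commute)
    finally show ?thesis by (simp add: power2_eq_square algebra_simps)
  qed
  then have "[:0,1:] dvd p1^2 * r" using assms(1) by (simp add: xdvd_iff)
  then have "[:0,1:] dvd p1^2 \<or> [:0,1:] dvd r" using x_prime by blast
  moreover have "\<not> [:0,1:] dvd p1^2"
    using assms(4) x_not_unit by (metis dvd_unit_imp_unit is_unit_power_iff)
  ultimately show ?thesis by blast
qed

lemma deg0_poly: "degree p = 0 \<Longrightarrow> p = [:coeff p 0:]"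
  by (metis degree_0_id)

lemma deg1_poly: "degree p = 1 \<Longrightarrow> p = [:coeff p 0, coeff p 1:]"
  by (intro poly_eqI) (auto simp: coeff_pCons coeff_eq_0 split: nat.splits)

lemma case0: fixes H1 H2 :: "'s::{idom_divide,algebraic_semidom} poly poly"
  assumes G: "[: r, 0, [:0, c:] :] = H1 * H2" and c: "is_unit c" and r: "coeff r 0 \<noteq> 0"
    and d: "degree H1 = 0"
  shows "is_unit H1"
proof -
  define h where "h = coeff H1 0"
  have H1: "H1 = [:h:]" using deg0_poly[OF d] h_def by simp
  have "h * coeff H2 2 = [:0,c:]" using arg_cong[OF G, of "\<lambda>p. coeff p 2"] H1
    by (simp add: numeral_2_eq_2)
  then have "is_unit h \<or> [:0,1:] dvd h" using divisor_lemma c by blast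
  moreover have "h * coeff H2 0 = r" using arg_cong[OF G, of "\<lambda>p. coeff p 0"] H1 by simp
  then have "h dvd r" by (metis dvd_triv_left)
  ultimately show ?thesis using r H1
    by (metis dvd_trans xdvd_iff is_unit_const_poly_iff)
qed

lemma irr_key: fixes r :: "'s::{idom_divide,algebraic_semidom} poly" and c :: 's
  assumes c: "is_unit c" and r: "coeff r 0 \<noteq> 0"
  shows "irreducible [: r, 0, [:0, c:] :]"
proof -
  let ?G = "[: r, 0, [:0, c:] :]"
  have c0: "c \<noteq> 0" using c by auto
  have degG: "degree ?G = 2" using c0 by (simp add: numeral_2_eq_2)
  have G0: "?G \<noteq> 0" using c0 by simp
  have Gnu: "\<not> is_unit ?G" using degG by (auto simp: is_unit_poly_iff)
  have main: "is_unit H1 \<or> is_unit H2" if G: "?G = H1 * H2" for H1 H2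
  proof -
    have "H1 \<noteq> 0" "H2 \<noteq> 0" using G G0 by auto
    then have dd: "degree H1 + degree H2 = 2" using degG G by (simp add: degree_mult_eq)
    consider "degree H1 = 0" | "degree H2 = 0" | "degree H1 = 1 \<and> degree H2 = 1" using dd by linarith
    then show ?thesis
    proof cases
      case 1 then show ?thesis using case0[OF G c r] by blast
    next
      case 2 then show ?thesis using case0[OF _ c r, of H2 H1] G by (simp add: mult.commute)
    next
      case 3
      define p0 p1 q0 q1 where "p0 = coeff H1 0" "p1 = coeff H1 1" "q0 = coeff H2 0" "q1 = coeff H2 1"
      have H1: "H1 = [:p0,p1:]" and H2: "H2 = [:q0,q1:]" using 3 deg1_poly p0_p1_q0_q1_def by metis+
      have "?G = [:p0*q0, p0*q1 + p1*q0, p1*q1:]" using G H1 H2 by (simp add: algebra_simps)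
      then have e: "p1*q1 = [:0,c:]" "p0*q1 + p1*q0 = 0" "p0*q0 = r" by simp_all
      have nx: "\<not> [:0,1:] dvd r" using r by (simp add: xdvd_iff)
      have "is_unit p1 \<or> [:0,1:] dvd p1" using divisor_lemma[OF e(1) c] .
      moreover have "is_unit q1 \<or> [:0,1:] dvd q1" using divisor_lemma[of q1 p1 c] e(1) c by (simp add: mult.commute)
      moreover have "\<not> is_unit p1" using case11[OF e] nx by blast
      moreover have "\<not> is_unit q1" using case11[of q1 p1 c q0 p0 r] e nx by (metis mult.commute add.commute)
      ultimately have "[:0,1:] dvd p1" "[:0,1:] dvd q1" by blast+
      then have "[:0,1:] * [:0,1:] dvd p1 * q1" by (rule mult_dvd_mono)
      then obtain s where "[:0,c:] = [:0,1:] * [:0,1:] * s" using e(1) by (elim dvdE) simp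
      then have "c = 0" by simp
      then show ?thesis using c0 by simp
    qed
  qed
  show ?thesis unfolding irreducible_def using G0 Gnu main by blast
qed

lemma "OFCLASS('k::field poly poly, algebraic_semidom_class)" by intro_classes



lemma rhom_eval: "rhom (\<lambda>p. poly p (a::'r::comm_ring_1))"
  by (simp add: rhom_def)

lemma transfer_irr:
  fixes phi :: "'r::{idom_divide,algebraic_semidom} \<Rightarrow> 's::{idom_divide,algebraic_semidom}" and psi :: "'s \<Rightarrow> 'r"
  assumes "rhom phi" "\<And>p. psi (phi p) = p" "rhom psi" "irreducible (phi F)"
  shows "irreducible F"
proof -
  have F0: "F \<noteq> 0" using assms(4) rhom_0[OF assms(1)] by auto
  have Fu: "\<not> is_unit F"
  proof
    assume "is_unit F"
    then obtain g where "1 = F * g" by (elim dvdE)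
    then have "1 = phi F * phi g" using rhom_mult[OF assms(1)] rhom_1[OF assms(1)] by metis
    then have "is_unit (phi F)" by (metis dvdI)
    then show False using assms(4) by (simp add: irreducible_def)
  qed
  have "is_unit a \<or> is_unit b" if "F = a * b" for a b
  proof -
    have "phi F = phi a * phi b" using that rhom_mult[OF assms(1)] by simp
    then have "is_unit (phi a) \<or> is_unit (phi b)" using assms(4) by (simp add: irreducible_def)
    moreover have "is_unit (psi (phi x))" if u: "is_unit (phi x)" for x
    proof -
      obtain g where "1 = phi x * g" using u by (elim dvdE)
      then have "1 = psi (phi x) * psi g" using rhom_mult[OF assms(3)] rhom_1[OF assms(3)] by metis
      then show ?thesis by (metis dvdI)
    qed
    ultimately show ?thesis using assms(2) by metis
  qed
  then show ?thesis using F0 Fu by (simp add: irreducible_def)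
qed

definition Kf :: "('k \<Rightarrow> 'r::comm_ring_1) \<Rightarrow> 'k \<Rightarrow> 'k \<Rightarrow> 'k \<Rightarrow> 'k \<Rightarrow> 'r \<Rightarrow> 'r \<Rightarrow> 'r" where
  "Kf c A B C D x z = c A * x^3 + c B * x^2 * z + c C * x * z^2 + c D * z^3"

lemma Kf_hom: "rhom h \<Longrightarrow> h (Kf c A B C D x z) = Kf (h \<circ> c) A B C D (h x) (h z)"
  by (simp add: Kf_def rhom_add rhom_mult rhom_power)

lemma ev_nonunit: fixes ev :: "'r::{idom_divide,algebraic_semidom} \<Rightarrow> 'k::field"
  assumes "rhom ev" "ev p = 0" shows "\<not> is_unit p"
proof
  assume "is_unit p"
  then obtain g where "1 = p * g" by (elim dvdE)
  then have "1 = ev p * ev g" using rhom_mult[OF assms(1)] rhom_1[OF assms(1)] by metis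
  then show False using assms(2) by simp
qed



lemma mc_rules:
  "mconst (a + b) = mconst a + mconst (b::'k::comm_ring_1)"
  "mconst (a * b) = mconst a * mconst b"
  "mconst (a - b) = mconst a - mconst b"
  "mconst (- a) = - mconst a"
  "mconst (a ^ n) = mconst a ^ n"
  "mconst (numeral k) = numeral k"
  "mconst 1 = 1" "mconst 0 = 0"
  by (rule rhom_add[OF rhom_mconst] rhom_mult[OF rhom_mconst] rhom_diff[OF rhom_mconst]
     rhom_uminus[OF rhom_mconst] rhom_power[OF rhom_mconst] rhom_numeral[OF rhom_mconst]
     rhom_1[OF rhom_mconst] rhom_0[OF rhom_mconst])+

lemma irr_dir:
  fixes e B1 B2 D1 D2 W Ak Bk Ck Dk :: "'k::field"
  assumes e2: "e^2 = W" and two: "(2::'k) \<noteq> 0" and e0: "e \<noteq> 0" and det: "B1*D2 - B2*D1 \<noteq> 0"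
  shows "irreducible (2 * var_t1 * var_t2 * (mconst B1 * var_X + mconst D1 * var_Z)
         - (var_t1^2 + mconst W * var_t2^2) * (mconst B2 * var_X + mconst D2 * var_Z)
         + mconst Ak * var_X^3 + mconst Bk * var_X^2 * var_Z + mconst Ck * var_X * var_Z^2 + mconst Dk * var_Z^3)"
    (is "irreducible ?F")
proof -
  define be be' de de' where "be = B1 + e*B2" and "be' = B1 - e*B2" and "de = D1 + e*D2" and "de' = D1 - e*D2"
  define Dl where "Dl = be'*de - de'*be"
  have Dl_eq: "Dl = 2*e*(B1*D2 - B2*D1)" unfolding Dl_def be_def be'_def de_def de'_def by (simp add: algebra_simps)
  have Dl0: "Dl \<noteq> 0" using Dl_eq two e0 det by simp
  define m where "m = 2*e*Dl"
  have m0: "m \<noteq> 0" using m_def two e0 Dl0 by simp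
  define T1 where "T1 = mconst e * (var_Z + var_t2)"
  define T2 :: "'k mpoly4" where "T2 = var_Z - var_t2"
  define T3 where "T3 = mconst de * var_X - mconst de' * var_t1"
  define T4 where "T4 = mconst be' * var_t1 - mconst be * var_X"
  define phi where "phi = s4 T1 T2 T3 T4"
  have hphi: "rhom phi" unfolding phi_def by (rule rhom_s4)
  have phiF1: "phi ?F = 2 * T1 * T2 * (mconst B1 * T3 + mconst D1 * T4)
         - (T1^2 + mconst W * T2^2) * (mconst B2 * T3 + mconst D2 * T4)
         + mconst Ak * T3^3 + mconst Bk * T3^2 * T4 + mconst Ck * T3 * T4^2 + mconst Dk * T4^3"
    unfolding phi_def
    by (simp only: rhom_add[OF rhom_s4] rhom_mult[OF rhom_s4] rhom_diff[OF rhom_s4] rhom_power[OF rhom_s4]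
         rhom_numeral[OF rhom_s4] s4_gens)
  have key: "2 * T1 * T2 * (mconst B1 * T3 + mconst D1 * T4)
         - (T1^2 + mconst W * T2^2) * (mconst B2 * T3 + mconst D2 * T4)
        = mconst m * (var_Z^2 * var_X - var_t2^2 * var_t1)"
  proof -
    have W: "mconst W = mconst e ^ 2" using e2 mc_rules(5)[of e 2] by simp
    show ?thesis unfolding T1_def T2_def T3_def T4_def m_def Dl_def be_def be'_def de_def de'_def W
      by (simp only: mc_rules) (simp add: algebra_simps power2_eq_square)
  qed
  have phiF: "phi ?F = mconst m * (var_Z^2 * var_X - var_t2^2 * var_t1) + Kf mconst Ak Bk Ck Dk T3 T4"
    unfolding phiF1 key[symmetric] Kf_def by (simp add: algebra_simps)
  define c3 :: "'k \<Rightarrow> 'k poly poly poly" where "c3 = (\<lambda>a. [:[:[:a:]:]:])"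
  define x' :: "'k poly poly poly" where "x' = [:0,1:]"
  define t1' :: "'k poly poly poly" where "t1' = [:[:[:0,1:]:]:]"
  define t2' :: "'k poly poly poly" where "t2' = [:[:0,1:]:]"
  define T3' where "T3' = c3 de * x' - c3 de' * t1'"
  define T4' where "T4' = c3 be' * t1' - c3 be * x'"
  define r' where "r' = - (c3 m * t2'^2 * t1') + Kf c3 Ak Bk Ck Dk T3' T4'"
  have T3: "T3 = [:T3':]" unfolding T3_def T3'_def c3_def x'_def t1'_def mconst_def var_X_def var_t1_def
    by simp
  have T4: "T4 = [:T4':]" unfolding T4_def T4'_def c3_def x'_def t1'_def mconst_def var_X_def var_t1_def
    by simp
  have mc: "mconst = (\<lambda>p. [:p:]) \<circ> c3" unfolding c3_def mconst_def by (simp add: fun_eq_iff)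
  have Kin: "Kf mconst Ak Bk Ck Dk T3 T4 = [: Kf c3 Ak Bk Ck Dk T3' T4' :]"
    unfolding T3 T4 mc using Kf_hom[OF rhom_const, of c3 Ak Bk Ck Dk T3' T4'] by simp
  have lead: "mconst m * (var_Z^2 * var_X - var_t2^2 * var_t1) = [: - (c3 m * t2'^2 * t1'), 0, [:0, [:[:m:]:]:] :]"
    unfolding c3_def t1'_def t2'_def mconst_def var_X_def var_t1_def var_t2_def var_Z_def
    by (simp add: power2_eq_square)
  have G: "phi ?F = [: r', 0, [:0, [:[:m:]:]:] :]"
    unfolding phiF Kin lead r'_def by simp
  have cu: "is_unit [:[:m:]:]" using m0 by (simp add: is_unit_const_poly_iff dvd_field_iff)
  have rc: "coeff r' 0 \<noteq> 0"
  proof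
    assume h: "coeff r' 0 = 0"
    have ev: "poly (poly (poly r' 0) [:\<tau>:]) 1 = - (m * \<tau>^2) + Kf id Ak Bk Ck Dk (- de') be'" for \<tau>
      unfolding r'_def Kf_def T3'_def T4'_def c3_def x'_def t1'_def t2'_def by simp
    have "poly r' 0 = 0" using h by (simp add: poly_0_coeff_0)
    then have "- (m * \<tau>^2) + Kf id Ak Bk Ck Dk (- de') be' = 0" for \<tau> using ev[of \<tau>] by simp
    from this[of 0] this[of 1] have "m = 0" by simp
    then show False using m0 by simp
  qed
  have irrG: "irreducible (phi ?F)" unfolding G by (rule irr_key[OF cu rc])
  define P1 where "P1 = mconst (1/Dl) * (mconst be * var_X + mconst de * var_Z)"
  define P2 :: "'k mpoly4" where "P2 = mconst (1/2) * (mconst (1/e) * var_t1 - var_t2)"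
  define P3 where "P3 = mconst (1/Dl) * (mconst be' * var_X + mconst de' * var_Z)"
  define P4 :: "'k mpoly4" where "P4 = mconst (1/2) * (mconst (1/e) * var_t1 + var_t2)"
  define psi where "psi = s4 P1 P2 P3 P4"
  have hpsi: "rhom psi" unfolding psi_def by (rule rhom_s4)
  have i2: "mconst (1/2) * 2 = (1::'k mpoly4)"
    by (metis mc_rules(2,6,7) two nonzero_divide_eq_eq mult_1)
  have ie: "mconst (1/e) * mconst e = (1::'k mpoly4)"
    by (metis mc_rules(2,7) e0 nonzero_divide_eq_eq mult_1)
  have iD: "mconst (1/Dl) * (mconst be' * mconst de - mconst de' * mconst be) = (1::'k mpoly4)"
    by (metis Dl_def mc_rules(2,3,7) Dl0 nonzero_divide_eq_eq mult_1)
  have inv: "psi (phi p) = p" for p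
  proof (rule rhom_unique[of "psi \<circ> phi", simplified])
    show "rhom (psi \<circ> phi)" by (rule rhom_comp[OF hpsi hphi])
    show "psi (phi (mconst a)) = mconst a" for a unfolding psi_def phi_def by (simp add: s4_gens)
    have hs: "psi (phi v) = psi (s4 T1 T2 T3 T4 v)" for v unfolding phi_def ..
    note R = rhom_mult[OF rhom_s4] rhom_add[OF rhom_s4] rhom_diff[OF rhom_s4] s4_gens
    have "psi (phi var_t1) = (mconst (1/2) * 2) * (mconst (1/e) * mconst e) * var_t1"
      unfolding psi_def phi_def s4_gens T1_def by (simp add: R P4_def P2_def algebra_simps)
    then show "psi (phi var_t1) = var_t1" using i2 ie by simp
    have "psi (phi var_t2) = (mconst (1/2) * 2) * var_t2"
      unfolding psi_def phi_def s4_gens T2_def by (simp add: R P4_def P2_def algebra_simps)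
    then show "psi (phi var_t2) = var_t2" using i2 by simp
    have "psi (phi var_X) = (mconst (1/Dl) * (mconst be' * mconst de - mconst de' * mconst be)) * var_X"
      unfolding psi_def phi_def s4_gens T3_def by (simp add: R P1_def P3_def algebra_simps)
    then show "psi (phi var_X) = var_X" using iD by simp
    have "psi (phi var_Z) = (mconst (1/Dl) * (mconst be' * mconst de - mconst de' * mconst be)) * var_Z"
      unfolding psi_def phi_def s4_gens T4_def by (simp add: R P1_def P3_def algebra_simps)
    then show "psi (phi var_Z) = var_Z" using iD by simp
  qed
  show ?thesis by (rule transfer_irr[OF hphi inv hpsi irrG])
qed



lemma red_dir:
  fixes l B1 B2 D1 D2 W Ak Bk Ck Dk :: "'k::field"
  assumes d1: "D1 = l*B1" and d2: "D2 = l*B2" and cond: "- Ak*l^3 + Bk*l^2 - Ck*l + Dk = 0"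
  shows "\<not> irreducible (2 * var_t1 * var_t2 * (mconst B1 * var_X + mconst D1 * var_Z)
         - (var_t1^2 + mconst W * var_t2^2) * (mconst B2 * var_X + mconst D2 * var_Z)
         + mconst Ak * var_X^3 + mconst Bk * var_X^2 * var_Z + mconst Ck * var_X * var_Z^2 + mconst Dk * var_Z^3)"
    (is "\<not> irreducible ?F")
proof
  assume irr: "irreducible ?F"
  define L :: "'k mpoly4" where "L = var_X + mconst l * var_Z"
  define G where "G = 2 * var_t1 * var_t2 * mconst B1 - (var_t1^2 + mconst W * var_t2^2) * mconst B2
      + mconst Ak * var_X^2 + mconst (Bk - l*Ak) * var_X * var_Z + mconst (Ck - l*(Bk - l*Ak)) * var_Z^2"
  have Dk: "Dk = Ak*l^3 - Bk*l^2 + Ck*l" using cond by (simp add: algebra_simps)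
  have fac: "?F = L * G"
    unfolding L_def G_def d1 d2 Dk by (simp only: mc_rules) (simp add: algebra_simps power2_eq_square power3_eq_cube)
  define ev :: "'k mpoly4 \<Rightarrow> 'k" where "ev = (\<lambda>p. poly (poly (poly (poly p 0) 0) 0) 0)"
  have hev: "rhom ev" unfolding ev_def by (simp add: rhom_def)
  have "ev L = 0" unfolding ev_def L_def mconst_def var_X_def var_Z_def by simp
  then have "\<not> is_unit L" by (rule ev_nonunit[OF hev])
  moreover have "ev G = 0" unfolding ev_def G_def mconst_def var_X_def var_Z_def var_t1_def var_t2_def by simp
  then have "\<not> is_unit G" by (rule ev_nonunit[OF hev])
  moreover have "is_unit L \<or> is_unit G" using irreducibleD[OF irr fac] .
  ultimately show False by blast
qed

lemma two_ne_0:
  assumes "odd (card (UNIV :: 'a::{finite,field} set))"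
  shows "(2::'a) \<noteq> 0"
proof
  assume h: "(2::'a) = 0"
  have "of_nat 2 = (0::'a)" using h by simp
  then have "CHAR('a) dvd 2" using of_nat_eq_0_iff_char_dvd by blast
  moreover have "CHAR('a) \<noteq> 1"
  proof
    assume "CHAR('a) = 1"
    then have "(of_nat 1::'a) = 0" using of_nat_CHAR[where 'a='a] by metis
    then show False by simp
  qed
  moreover have "CHAR('a) \<noteq> 0" by (simp add: finite_imp_CHAR_pos)
  ultimately have "CHAR('a) = 2" using dvd_imp_le by (metis One_nat_def dvd_1_left dvd_antisym nat_dvd_1_iff_1 prime_nat_iff two_is_prime_nat)
  then show False using CHAR_dvd_CARD[where 'a='a] assms by simp
qed



theorem mainTheorem5:
  fixes w :: "'a::{finite,field}"
    and eps :: "'a alg_closure"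
    and a1 a2 b1 b2 c1 c2 d1 d2 e1 e2 :: 'a
  assumes "odd (card (UNIV :: 'a set))"
    and "\<not> (\<exists>y::'a. y^2 = w)"
    and "eps^2 = to_ac w"
    and "conic_nonsingular (to_ac a1 + eps * to_ac a2) (to_ac b1 + eps * to_ac b2)
           (to_ac c1 + eps * to_ac c2) (to_ac d1 + eps * to_ac d2) (to_ac e1 + eps * to_ac e2)"
    and "to_ac b1 + eps * to_ac b2 \<noteq> 0"
  shows "irreducible (surface_poly to_ac w a1 a2 b1 b2 c1 c2 d1 d2 e1 e2)
           \<longleftrightarrow> b1*d2 - b2*d1 \<noteq> 0"
proof
  assume irr: "irreducible (surface_poly to_ac w a1 a2 b1 b2 c1 c2 d1 d2 e1 e2)"
  show "b1*d2 - b2*d1 \<noteq> 0"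
  proof
    assume det: "b1*d2 - b2*d1 = 0"
    have "b1 \<noteq> 0 \<or> b2 \<noteq> 0" using assms(5) by auto
    then obtain l where l: "d1 = l*b1" "d2 = l*b2"
    proof
      assume "b1 \<noteq> 0"
      then show ?thesis using det that[of "d1/b1"] by (simp add: field_simps)
    next
      assume b2: "b2 \<noteq> 0"
      then show ?thesis using det that[of "d2/b2"] by (simp add: field_simps)
    qed
    have cond: "- (- a2*b1 + a1*b2) * l^3 + (b2*c1 - b1*c2 - a2*d1 + a1*d2) * l^2
       - (- c2*d1 + c1*d2 + b2*e1 - b1*e2) * l + (d2*e1 - d1*e2) = 0"
      unfolding l by (simp add: algebra_simps power2_eq_square power3_eq_cube)
    have "\<not> irreducible (surface_poly to_ac w a1 a2 b1 b2 c1 c2 d1 d2 e1 e2)"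
      unfolding surface_poly_def Let_def
    proof (rule red_dir[where l = "to_ac l"])
      show "to_ac d1 = to_ac l * to_ac b1" using l by simp
      show "to_ac d2 = to_ac l * to_ac b2" using l by simp
      show "- to_ac (- a2*b1 + a1*b2) * to_ac l ^ 3 + to_ac (b2*c1 - b1*c2 - a2*d1 + a1*d2) * to_ac l ^ 2
       - to_ac (- c2*d1 + c1*d2 + b2*e1 - b1*e2) * to_ac l + to_ac (d2*e1 - d1*e2) = 0"
        unfolding l by (simp add: algebra_simps power2_eq_square power3_eq_cube)
    qed
    then show False using irr by simp
  qed
next
  assume det: "b1*d2 - b2*d1 \<noteq> 0"
  have two: "(2::'a alg_closure) \<noteq> 0"
    using two_ne_0[OF assms(1)] to_ac_numeral[of "num.Bit0 num.One", where 'a='a] by (metis to_ac_eq_0_iff)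
  have e0: "eps \<noteq> 0"
  proof
    assume "eps = 0"
    then have "w = 0" using assms(3) by simp
    then show False using assms(2) by auto
  qed
  show "irreducible (surface_poly to_ac w a1 a2 b1 b2 c1 c2 d1 d2 e1 e2)"
    unfolding surface_poly_def Let_def
  proof (rule irr_dir[OF assms(3) two e0])
    show "to_ac b1 * to_ac d2 - to_ac b2 * to_ac d1 \<noteq> 0"
      using det by (metis to_ac_mult to_ac_diff to_ac_eq_0_iff)
  qed
qed

end
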